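(* Let $R$ be an integral domain, $M$ an $R$-module, and $d$ an integer-valued metric on $M$. Then the function $\Delta:\mathbb{P}^*(M)\times\mathbb{P}^*(M)\to\mathbb{Z}$ is a metric on $\mathbb{P}^*(M)$.
   Context: Let $M^\circ=M\setminus\{0\}$; define $x\sim'y$ on $M^\circ$ if there exist $m\in M$ and $r,s\in R$ with $x=rm$, $y=sm$; let $\sim$ be the equivalence relation generated by $\sim'$; $\mathbb{P}(M)=M^\circ/\sim$, and $\mathbb{P}^*(M)=\{*\}\sqcup\mathbb{P}(M)$, where $*$ is the class consisting of $0\in M$ alone. For classes $[x],[y]\in\mathbb{P}^*(M)$ set $\delta([x],[y])=\inf\{d(x',y'): x'\in[x],\ y'\in[y]\}$, and $\Delta([x],[y])=\min\{\delta([x_0],[x_1])+\delta([x_1],[x_2])+\cdots+\delta([x_{n-1}],[x_n])\}$, the minimum over all finite sequences of classes with $[x_0]=[x]$ and $[x_n]=[y]$. *)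

theory Defs
  imports Complex_Main
begin

definition int_metric_on :: "'a set \<Rightarrow> ('a \<Rightarrow> 'a \<Rightarrow> int) \<Rightarrow> bool" where
  "int_metric_on S D \<longleftrightarrow>
     (\<forall>x\<in>S. \<forall>y\<in>S. 0 \<le> D x y \<and> (D x y = 0 \<longleftrightarrow> x = y) \<and> D x y = D y x) \<and>
     (\<forall>x\<in>S. \<forall>y\<in>S. \<forall>z\<in>S. D x z \<le> D x y + D y z)"

definition pre_sim :: "('r::comm_ring_1 \<Rightarrow> 'm::ab_group_add \<Rightarrow> 'm) \<Rightarrow> ('m \<times> 'm) set" where
  "pre_sim scale = {(x, y). x \<noteq> 0 \<and> y \<noteq> 0 \<and> (\<exists>m r s. x = scale r m \<and> y = scale s m)}"

text \<open>The equivalence relation generated by ~' (on nonzero elements), with 0 alone in its class.\<close>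
definition proj_sim :: "('r::comm_ring_1 \<Rightarrow> 'm::ab_group_add \<Rightarrow> 'm) \<Rightarrow> ('m \<times> 'm) set" where
  "proj_sim scale = (pre_sim scale \<union> converse (pre_sim scale))\<^sup>*"

text \<open>P*(M) = {*} \<union> P(M), as the set of equivalence classes; * is the class {0}.\<close>
definition proj_star :: "('r::comm_ring_1 \<Rightarrow> 'm::ab_group_add \<Rightarrow> 'm) \<Rightarrow> 'm set set" where
  "proj_star scale = UNIV // proj_sim scale"

definition class_dist :: "('m \<Rightarrow> 'm \<Rightarrow> int) \<Rightarrow> 'm set \<Rightarrow> 'm set \<Rightarrow> int" where
  "class_dist d X Y = Inf {d x y | x y. x \<in> X \<and> y \<in> Y}"

definition Delta :: "('r::comm_ring_1 \<Rightarrow> 'm::ab_group_add \<Rightarrow> 'm) \<Rightarrow> ('m \<Rightarrow> 'm \<Rightarrow> int)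
    \<Rightarrow> 'm set \<Rightarrow> 'm set \<Rightarrow> int" where
  "Delta scale d X Y = Inf {(\<Sum>i<n. class_dist d (c i) (c (Suc i))) | n c.
      c 0 = X \<and> c n = Y \<and> (\<forall>i\<le>n. c i \<in> proj_star scale)}"

end

theory Submission
  imports Defs
begin

lemma int_Inf_mem:
  fixes S :: "int set"
  assumes "S \<noteq> {}" "\<And>x. x \<in> S \<Longrightarrow> 0 \<le> x"
  shows "Inf S \<in> S"
proof (rule ccontr)
  assume nm: "Inf S \<notin> S"
  have bb: "bdd_below S" using assms(2) by (auto simp: bdd_below_def)
  have "\<And>x. x \<in> S \<Longrightarrow> Inf S + 1 \<le> x"
  proof -
    fix x assume "x \<in> S"
    then have "Inf S \<le> x" "Inf S \<noteq> x" using cInf_lower[OF _ bb] nm by auto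
    then show "Inf S + 1 \<le> x" by simp
  qed
  then have "Inf S + 1 \<le> Inf S" using cInf_greatest[OF assms(1)] by blast
  then show False by simp
qed

lemma equiv_ps: "equiv UNIV (proj_sim scale)"
  unfolding proj_sim_def
  by (rule equivI) (auto simp: refl_on_def sym_rtrancl sym_Un_converse trans_def)

lemma cls_ne: "X \<in> proj_star scale \<Longrightarrow> X \<noteq> {}"
  unfolding proj_star_def using equiv_ps in_quotient_imp_non_empty by blast

lemma cls_disj: "X \<in> proj_star scale \<Longrightarrow> Y \<in> proj_star scale \<Longrightarrow> X \<noteq> Y \<Longrightarrow> X \<inter> Y = {}"
  unfolding proj_star_def using equiv_ps quotient_disj by blast

context
  fixes scale :: "'r::idom \<Rightarrow> 'm::ab_group_add \<Rightarrow> 'm"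
    and d :: "'m \<Rightarrow> 'm \<Rightarrow> int"
  assumes dm: "int_metric_on UNIV d"
begin

lemma d0: "0 \<le> d x y" and dsym: "d x y = d y x" and dz: "d x y = 0 \<longleftrightarrow> x = y"
  using dm unfolding int_metric_on_def by auto

lemma cd_nonneg: "0 \<le> class_dist d X Y" if "X \<in> proj_star scale" "Y \<in> proj_star scale"
proof -
  have "{d x y | x y. x \<in> X \<and> y \<in> Y} \<noteq> {}" using cls_ne[OF that(1)] cls_ne[OF that(2)] by blast
  then show ?thesis unfolding class_dist_def by (rule cInf_greatest) (auto simp: d0)
qed

lemma cd_sym: "class_dist d X Y = class_dist d Y X"
proof -
  have "{d x y | x y. x \<in> X \<and> y \<in> Y} = {d x y | x y. x \<in> Y \<and> y \<in> X}"
    using dsym by blast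
  then show ?thesis unfolding class_dist_def by simp
qed

lemma cd_pos: "1 \<le> class_dist d X Y" if "X \<in> proj_star scale" "Y \<in> proj_star scale" "X \<noteq> Y"
proof -
  have "{d x y | x y. x \<in> X \<and> y \<in> Y} \<noteq> {}" using cls_ne[OF that(1)] cls_ne[OF that(2)] by blast
  moreover have "\<And>x y. x \<in> X \<Longrightarrow> y \<in> Y \<Longrightarrow> 1 \<le> d x y"
  proof -
    fix x y assume "x \<in> X" "y \<in> Y"
    then have "x \<noteq> y" using cls_disj[OF that] by blast
    then show "1 \<le> d x y" using d0[of x y] dz[of x y] by simp
  qed
  ultimately show ?thesis unfolding class_dist_def by (intro cInf_greatest) auto
qed

lemma cd_refl: "class_dist d X X = 0" if XX: "X \<in> proj_star scale"
proof -
  obtain x where x: "x \<in> X" using cls_ne[OF XX] by blast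
  have bb: "bdd_below {d x y | x y. x \<in> X \<and> y \<in> X}"
    by (rule bdd_belowI[of _ 0]) (auto simp: d0)
  have "d x x \<in> {d x y | x y. x \<in> X \<and> y \<in> X}" using x by blast
  then have "class_dist d X X \<le> 0" unfolding class_dist_def using cInf_lower[OF _ bb] dz[of x x] by force
  then show ?thesis using cd_nonneg[OF XX XX] by simp
qed

definition T where "T X Y = {(\<Sum>i<(n::nat). class_dist d (c i) (c (Suc i))) | n c.
      c 0 = X \<and> c n = Y \<and> (\<forall>i\<le>n. c i \<in> proj_star scale)}"

lemma Delta_T: "Delta scale d X Y = Inf (T X Y)"
  unfolding Delta_def T_def ..

lemma T_nonneg: "t \<in> T X Y \<Longrightarrow> 0 \<le> t"
  unfolding T_def by (force intro!: sum_nonneg cd_nonneg)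

lemma T_ne: "X \<in> proj_star scale \<Longrightarrow> Y \<in> proj_star scale \<Longrightarrow> T X Y \<noteq> {}"
proof -
  assume X: "X \<in> proj_star scale" and Y: "Y \<in> proj_star scale"
  define c where "c (i::nat) = (if i = 0 then X else Y)" for i
  have "(\<Sum>i<1. class_dist d (c i) (c (Suc i))) \<in> T X Y" unfolding T_def
    using X Y by (intro CollectI exI[of _ "1::nat"] exI[of _ c]) (auto simp: c_def)
  then show ?thesis by blast
qed

lemma Delta_mem: "X \<in> proj_star scale \<Longrightarrow> Y \<in> proj_star scale \<Longrightarrow> Delta scale d X Y \<in> T X Y"
  unfolding Delta_T by (rule int_Inf_mem[OF T_ne]) (auto simp: T_nonneg)

lemma Delta_le: "t \<in> T X Y \<Longrightarrow> Delta scale d X Y \<le> t"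
  unfolding Delta_T by (rule cInf_lower) (auto intro!: bdd_belowI[of _ 0] T_nonneg)

lemma T_rev: "t \<in> T X Y \<Longrightarrow> t \<in> T Y X"
proof -
  assume "t \<in> T X Y"
  then obtain n c where t: "t = (\<Sum>i<n. class_dist d (c i) (c (Suc i)))"
    and c: "c 0 = X" "c n = Y" "\<forall>i\<le>n. c i \<in> proj_star scale" unfolding T_def by blast
  define c' where "c' i = c (n - i)" for i
  have "(\<Sum>i<n. class_dist d (c' i) (c' (Suc i))) = (\<Sum>i<n. (\<lambda>j. class_dist d (c j) (c (Suc j))) (n - Suc i))"
    by (rule sum.cong) (auto simp: c'_def cd_sym Suc_diff_Suc)
  also have "\<dots> = t" unfolding t by (rule sum.nat_diff_reindex)
  finally show "t \<in> T Y X" unfolding T_def using c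
    by (intro CollectI exI[of _ n] exI[of _ c']) (auto simp: c'_def)
qed

lemma T_app: "s \<in> T X Y \<Longrightarrow> t \<in> T Y Z \<Longrightarrow> s + t \<in> T X Z"
proof -
  assume "s \<in> T X Y" "t \<in> T Y Z"
  then obtain n c m e where s: "s = (\<Sum>i<n. class_dist d (c i) (c (Suc i)))"
    and c: "c 0 = X" "c n = Y" "\<forall>i\<le>n. c i \<in> proj_star scale"
    and t: "t = (\<Sum>i<m. class_dist d (e i) (e (Suc i)))"
    and e: "e 0 = Y" "e m = Z" "\<forall>i\<le>m. e i \<in> proj_star scale" unfolding T_def by blast
  define f where "f i = (if i \<le> n then c i else e (i - n))" for i
  have "(\<Sum>i<n+m. class_dist d (f i) (f (Suc i))) =
     (\<Sum>i<n. class_dist d (f i) (f (Suc i))) + (\<Sum>i=n..<n+m. class_dist d (f i) (f (Suc i)))"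
    by (metis add.commute atLeast0LessThan le_add2 sum.atLeastLessThan_concat zero_le)
  also have "(\<Sum>i<n. class_dist d (f i) (f (Suc i))) = s"
    unfolding s by (rule sum.cong) (auto simp: f_def)
  also have "(\<Sum>i=n..<n+m. class_dist d (f i) (f (Suc i))) = (\<Sum>i=0..<m. class_dist d (f (i+n)) (f (Suc (i+n))))"
    unfolding add.commute[of n m]
    using sum.shift_bounds_nat_ivl[of "\<lambda>i. class_dist d (f i) (f (Suc i))" 0 n m] by simp
  also have "\<dots> = t" unfolding t atLeast0LessThan
    by (rule sum.cong) (auto simp: f_def c e Suc_diff_le)
  finally show ?thesis unfolding T_def using c e
    by (intro CollectI exI[of _ "n+m"] exI[of _ f]) (auto simp: f_def)
qed

lemma T_refl: "X \<in> proj_star scale \<Longrightarrow> 0 \<in> T X X"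
proof -
  assume X: "X \<in> proj_star scale"
  have "(\<Sum>i<(0::nat). class_dist d ((\<lambda>_. X) i) ((\<lambda>_. X) (Suc i))) \<in> T X X"
    unfolding T_def using X by (intro CollectI exI[of _ "0::nat"] exI[of _ "\<lambda>_. X"]) auto
  then show ?thesis by simp
qed

lemma T_zero: "0 \<in> T X Y \<Longrightarrow> X = Y"
proof -
  assume "0 \<in> T X Y"
  then obtain n c where t: "0 = (\<Sum>i<n. class_dist d (c i) (c (Suc i)))"
    and c: "c 0 = X" "c n = Y" "\<forall>i\<le>n. c i \<in> proj_star scale" unfolding T_def by blast
  have "\<forall>i\<in>{..<n}. class_dist d (c i) (c (Suc i)) = 0"
    using t[symmetric] c(3) by (subst sum_nonneg_eq_0_iff[symmetric]) (auto intro!: cd_nonneg)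
  then have eq: "\<And>i. i < n \<Longrightarrow> c i = c (Suc i)" using cd_pos c(3)
    by (metis Suc_leI less_imp_le_nat lessThan_iff not_one_le_zero)
  have "\<And>k. k \<le> n \<Longrightarrow> c k = c 0"
  proof -
    fix k show "k \<le> n \<Longrightarrow> c k = c 0"
      by (induction k) (auto simp: eq[symmetric])
  qed
  then show ?thesis using c by auto
qed

end

theorem theorem5p2:
  fixes scale :: "'r::idom \<Rightarrow> 'm::ab_group_add \<Rightarrow> 'm"
    and d :: "'m \<Rightarrow> 'm \<Rightarrow> int"
  assumes "module scale"
    and "int_metric_on UNIV d"
  shows "int_metric_on (proj_star scale) (Delta scale d)"
proof -
  note dm = assms(2)
  have A: "0 \<le> Delta scale d X Y \<and> (Delta scale d X Y = 0 \<longleftrightarrow> X = Y) \<and> Delta scale d X Y = Delta scale d Y X"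
    if X: "X \<in> proj_star scale" and Y: "Y \<in> proj_star scale" for X Y
  proof (intro conjI iffI)
    show "0 \<le> Delta scale d X Y" using T_nonneg[OF dm Delta_mem[OF dm X Y]] .
    show "Delta scale d X Y = 0 \<Longrightarrow> X = Y" proof -
      assume "Delta scale d X Y = 0"
      then show "X = Y" using T_zero[OF dm] Delta_mem[OF dm X Y] by simp
    qed
    show "X = Y \<Longrightarrow> Delta scale d X Y = 0"
    proof -
      assume "X = Y"
      have "0 \<in> T scale d X X" using T_refl[OF dm X] .
      then have "Delta scale d X X \<le> 0" by (rule Delta_le[OF dm])
      then show ?thesis using T_nonneg[OF dm Delta_mem[OF dm X X]] \<open>X = Y\<close> by simp
    qed
    show "Delta scale d X Y = Delta scale d Y X"
      using Delta_le[OF dm T_rev[OF dm Delta_mem[OF dm X Y]]]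
        Delta_le[OF dm T_rev[OF dm Delta_mem[OF dm Y X]]] by simp
  qed
  have B: "Delta scale d X Z \<le> Delta scale d X Y + Delta scale d Y Z"
    if "X \<in> proj_star scale" "Y \<in> proj_star scale" "Z \<in> proj_star scale" for X Y Z
    using Delta_le[OF dm T_app[OF dm Delta_mem[OF dm that(1,2)] Delta_mem[OF dm that(2,3)]]] .
  show ?thesis unfolding int_metric_on_def
  proof (rule conjI)
    show "\<forall>X\<in>proj_star scale. \<forall>Y\<in>proj_star scale. 0 \<le> Delta scale d X Y \<and> (Delta scale d X Y = 0 \<longleftrightarrow> X = Y) \<and> Delta scale d X Y = Delta scale d Y X"
      by (intro ballI) (rule A)
    show "\<forall>X\<in>proj_star scale. \<forall>Y\<in>proj_star scale. \<forall>Z\<in>proj_star scale. Delta scale d X Z \<le> Delta scale d X Y + Delta scale d Y Z"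
      by (intro ballI) (rule B)
  qed
qed

end
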